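(* For every integer $n\ge0$, $$\sum_{k=0}^n\frac{\binom{2n+1}{k}(-1)^k}{k-(2n+1)}=-\frac34\sum_{k=1}^n\frac{\binom{2k}{k}(-1)^k}{k}-\sum_{k=0}^n\frac{\binom{2k}{k}(-1)^k}{2k+1}.$$ *)

theory Defs
  imports Complex_Main
begin

end

theory Submission
  imports Defs
begin

lemma altsum: "(\<Sum>j\<le>r. (-1)^j * real (Suc m choose j)) = (-1)^r * real (m choose r)"
proof (induction r)
  case 0 then show ?case by simp
next
  case (Suc r)
  then show ?case by (simp add: algebra_simps)
qed

lemma upper:
  assumes "r \<le> m"
  shows "(\<Sum>j\<in>{Suc r..Suc m}. (-1)^j * real (Suc m choose j)) = -((-1)^r * real (m choose r))"
proof -
  have z: "(\<Sum>j\<le>Suc m. (-1)^j * real (Suc m choose j)) = 0"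
    using choose_alternating_sum[of "Suc m", where 'a=real] by simp
  have e: "{..Suc m} = {..r} \<union> {Suc r..Suc m}" using assms by auto
  have "(\<Sum>j\<le>Suc m. (-1)^j * real (Suc m choose j)) =
     (\<Sum>j\<le>r. (-1)^j * real (Suc m choose j)) + (\<Sum>j\<in>{Suc r..Suc m}. (-1)^j * real (Suc m choose j))"
    unfolding e by (rule sum.union_disjoint) auto
  with z altsum[where r=r and m=m] show ?thesis by linarith
qed

lemma term_id:
  assumes "j \<ge> 1"
  shows "real (Suc m choose j) / real j = real (m choose j) / real j + real (Suc m choose j) / real (Suc m)"
proof -
  obtain i where j: "j = Suc i" using assms by (cases j) auto
  have a: "real (Suc m) * real (m choose i) = real (Suc m choose Suc i) * real (Suc i)"
    using Suc_times_binomial_eq[of m i] by (metis of_nat_mult)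
  have "real (m choose i) / real (Suc i) = real (Suc m choose Suc i) / real (Suc m)"
    using a by (simp add: field_simps)
  then show ?thesis unfolding j by (simp add: add_divide_distrib)
qed

lemma key:
  "(\<Sum>j\<in>{Suc r..r+d}. (-1)^j * real (r+d choose j) / real j)
     = (-1)^(Suc r) * (\<Sum>t<d. real (r+t choose r) / real (r+t+1))"
proof (induction d)
  case 0 then show ?case by simp
next
  case (Suc d)
  define m where "m = r + d"
  have "(\<Sum>j\<in>{Suc r..Suc m}. (-1)^j * real (Suc m choose j) / real j)
     = (\<Sum>j\<in>{Suc r..Suc m}. (-1)^j * real (m choose j) / real j
          + ((-1)^j * real (Suc m choose j)) / real (Suc m))"
  proof (rule sum.cong)
    fix j assume "j \<in> {Suc r..Suc m}"
    then have "j \<ge> 1" by auto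
    from term_id[OF this, of m]
    have "(-1)^j * (real (Suc m choose j) / real j) = (-1)^j * (real (m choose j) / real j + real (Suc m choose j) / real (Suc m))"
      by simp
    then show "(-1)^j * real (Suc m choose j) / real j = (-1)^j * real (m choose j) / real j
          + ((-1)^j * real (Suc m choose j)) / real (Suc m)"
      by (simp add: algebra_simps)
  qed simp
  also have "\<dots> = (\<Sum>j\<in>{Suc r..Suc m}. (-1)^j * real (m choose j) / real j)
        + (\<Sum>j\<in>{Suc r..Suc m}. (-1)^j * real (Suc m choose j)) / real (Suc m)"
    by (simp only: sum.distrib sum_divide_distrib)
  also have "(\<Sum>j\<in>{Suc r..Suc m}. (-1)^j * real (m choose j) / real j)
       = (\<Sum>j\<in>{Suc r..m}. (-1)^j * real (m choose j) / real j)"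
    by (simp add: m_def)
  also have "(\<Sum>j\<in>{Suc r..Suc m}. (-1)^j * real (Suc m choose j)) = -((-1)^r * real (m choose r))"
    by (rule upper) (simp add: m_def)
  finally show ?case using Suc.IH unfolding m_def
    by (simp add: field_simps)
qed

definition aa :: "nat \<Rightarrow> nat \<Rightarrow> real" where
  "aa n t = real (n+t choose n) / real (n+t+1)"

definition AA :: "nat \<Rightarrow> real" where
  "AA n = (\<Sum>t<Suc n. aa n t)"

lemma h1: "real (Suc (n+s) choose Suc n) = real (n+s choose n) * real (n+s+1) / real (n+1)"
proof -
  have "real (Suc (n+s)) * real (n+s choose n) = real (Suc (n+s) choose Suc n) * real (Suc n)"
    using Suc_times_binomial_eq[of "n+s" n] by (metis of_nat_mult)
  then show ?thesis by (simp add: field_simps)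
qed

lemma h2: "real (Suc (n+s) choose n) = real (n+s choose n) * real (n+s+1) / real (s+1)"
proof -
  have s1: "Suc (n+s) choose n = Suc (n+s) choose Suc s"
    using binomial_symmetric[of n "Suc (n+s)"] by (simp add: Suc_diff_le)
  have s2: "n+s choose n = n+s choose s"
    using binomial_symmetric[of n "n+s"] by simp
  have "real (Suc (n+s)) * real (n+s choose s) = real (Suc (n+s) choose Suc s) * real (Suc s)"
    using Suc_times_binomial_eq[of "n+s" s] by (metis of_nat_mult)
  then show ?thesis unfolding s1 s2 by (simp add: field_simps)
qed

lemma alg:
  fixes a b c :: real
  assumes "a > 0" "b > 0"
  shows "c*b/a/(b+1) + c/b = c*b/(b+1)*(a+b+1)/a^2 - c/b*(b-a)*(a+b)/a^2"
proof -
  have "a \<noteq> 0" "b \<noteq> 0" "b+1 \<noteq> 0" using assms by auto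
  then show ?thesis by (simp add: divide_simps power2_eq_square) algebra
qed

lemma step_id:
  "aa (Suc n) s + aa n s = aa n (Suc s) * real (Suc s) * real (Suc s + 2*n+2) / real (n+1)^2
      - aa n s * real s * real (s+2*n+2) / real (n+1)^2"
proof -
  define c where "c = real (n+s choose n)"
  define a where "a = real (n+1)"
  define b where "b = real (n+s+1)"
  have ab: "a > 0" "b > 0" unfolding a_def b_def by auto
  have e1: "aa (Suc n) s = c*b/a/(b+1)"
    unfolding aa_def c_def a_def b_def using h1[of n s] by simp
  have e2: "aa n (Suc s) * real (Suc s) = c*b/(b+1)"
    unfolding aa_def c_def b_def using h2[of n s] by (simp add: field_simps)
  have e3: "aa n s = c/b" unfolding aa_def c_def b_def by simp
  have e4: "real (Suc s + 2*n+2) = a+b+1" unfolding a_def b_def by simp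
  have e5: "real s = b - a" unfolding a_def b_def by simp
  have e6: "real (s+2*n+2) = a+b" unfolding a_def b_def by simp
  have e7: "real (n+1) = a" unfolding a_def by simp
  show ?thesis unfolding e1 e2 e3 e4 e5 e6 e7
    using alg[OF ab, of c] by simp
qed

lemma tele: "(\<Sum>t<s. aa (Suc n) t + aa n t) = aa n s * real s * real (s+2*n+2) / real (n+1)^2"
proof (induction s)
  case 0 then show ?case by simp
next
  case (Suc s)
  have "(\<Sum>t<Suc s. aa (Suc n) t + aa n t) = (\<Sum>t<s. aa (Suc n) t + aa n t) + (aa (Suc n) s + aa n s)"
    by (simp only: sum.lessThan_Suc)
  also have "\<dots> = aa n s * real s * real (s+2*n+2) / real (n+1)^2 + (aa (Suc n) s + aa n s)"
    by (simp only: Suc.IH)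
  also have "aa (Suc n) s + aa n s = aa n (Suc s) * real (Suc s) * real (Suc s + 2*n+2) / real (n+1)^2
      - aa n s * real s * real (s+2*n+2) / real (n+1)^2" by (rule step_id)
  finally show ?case by simp
qed

lemma cancel2: "x \<noteq> 0 \<Longrightarrow> c*(2*x)/x = 2*(c::real)"
  by simp

lemma alg2:
  fixes x c :: real
  assumes "x \<ge> 0"
  shows "c/(2*x+2)*(x+1)*(3*x+3)/(x+1)^2 + 2*c/(2*x+3) = 2*c*(3/(4*(x+1)) + 1/(2*x+3))"
proof -
  have "x+1 \<noteq> 0" "2*x+2 \<noteq> 0" "2*x+3 \<noteq> 0" using assms by auto
  then show ?thesis by (simp add: divide_simps power2_eq_square) algebra
qed

lemma AA_rec: "AA (Suc n) + AA n = real (2*n+2 choose (n+1)) * (3/(4*real (n+1)) + 1/(2*real n + 3))"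
proof -
  have s1: "AA (Suc n) = (\<Sum>t<Suc n. aa (Suc n) t) + aa (Suc n) (Suc n)"
    unfolding AA_def by (rule sum.lessThan_Suc)
  have "AA (Suc n) + AA n = (\<Sum>t<Suc n. aa (Suc n) t + aa n t) + aa (Suc n) (Suc n)"
    unfolding s1 by (simp add: AA_def sum.distrib)
  also have "(\<Sum>t<Suc n. aa (Suc n) t + aa n t) = aa n (Suc n) * real (Suc n) * real (Suc n + 2*n+2) / real (n+1)^2"
    by (rule tele)
  finally have e: "AA (Suc n) + AA n = aa n (Suc n) * real (Suc n) * real (Suc n + 2*n+2) / real (n+1)^2 + aa (Suc n) (Suc n)" .
  define c where "c = real (2*n+1 choose n)"
  have q1: "n + Suc n = 2*n+1" by simp
  have q2: "Suc n + Suc n = 2*n+2" by simp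
  have q3: "Suc (2*n+1) = 2*n+2" by simp
  have b1: "aa n (Suc n) = c / (2*real n+2)"
    unfolding aa_def c_def q1 by simp
  have h: "real (2*n+2 choose Suc n) = c * real (2*n+1+1) / real (n+1)"
    using h1[of n "Suc n"] unfolding c_def q1 q3 .
  have r: "real (2*n+1+1) = 2 * real (n+1)" by simp
  have b2: "real (2*n+2 choose (n+1)) = 2 * c"
  proof -
    have pos: "real (n+1) \<noteq> 0" by (simp only: of_nat_eq_0_iff)
    have "real (2*n+2 choose (n+1)) = c*(2*real(n+1))/real(n+1)"
      using h[unfolded r] by (simp only: Suc_eq_plus1)
    also have "\<dots> = 2*c" using pos by (rule cancel2)
    finally show ?thesis .
  qed
  have b3: "aa (Suc n) (Suc n) = 2*c / (2*real n+3)"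
    unfolding aa_def q2 using b2 by simp
  have b4: "real (Suc n) = real n + 1" "real (Suc n + 2*n+2) = 3*real n + 3" "real (n+1) = real n + 1" by simp_all
  show ?thesis unfolding e b1 b2 b3 b4 using alg2[of "real n" c] by simp
qed

lemma split1: "sum f {1..Suc n} = sum f {1..n} + (f (Suc n) :: real)" by simp
lemma split0: "sum f {0..Suc n} = sum f {0..n} + (f (Suc n) :: real)" by simp

lemma AA0: "AA 0 = 1" unfolding AA_def aa_def by simp

lemma rhs_eq: "- (3/4) * (\<Sum>k=1..n. real ((2*k) choose k) * (-1)^k / real k)
         - (\<Sum>k=0..n. real ((2*k) choose k) * (-1)^k / (2 * real k + 1)) = (-1)^(Suc n) * AA n"
proof (induction n)
  case 0 then show ?case by (simp add: AA0)
next
  case (Suc n)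
  define B where "B = real (2*n+2 choose (n+1))"
  define sg where "sg = ((-1::real)^(Suc n))"
  have q: "2 * Suc n = 2*n+2" "Suc n = n+1" by simp_all
  have t1: "real ((2*Suc n) choose Suc n) * (-1)^Suc n / real (Suc n) = sg * B / real (n+1)"
    unfolding B_def sg_def by (simp only: q) simp
  have t2: "real ((2*Suc n) choose Suc n) * (-1)^Suc n / (2 * real (Suc n) + 1) = sg * B / (2*real n + 3)"
    unfolding B_def sg_def by (simp only: q) (simp add: algebra_simps)
  have "- (3/4) * (\<Sum>k=1..Suc n. real ((2*k) choose k) * (-1)^k / real k)
         - (\<Sum>k=0..Suc n. real ((2*k) choose k) * (-1)^k / (2 * real k + 1))
       = (- (3/4) * (\<Sum>k=1..n. real ((2*k) choose k) * (-1)^k / real k)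
         - (\<Sum>k=0..n. real ((2*k) choose k) * (-1)^k / (2 * real k + 1)))
         - (3/4) * (real ((2*Suc n) choose Suc n) * (-1)^Suc n / real (Suc n))
         - real ((2*Suc n) choose Suc n) * (-1)^Suc n / (2 * real (Suc n) + 1)"
    by (simp only: split1 split0) (simp only: algebra_simps)
  also have "\<dots> = sg * AA n - (3/4) * (sg * B / real (n+1)) - sg * B / (2*real n + 3)"
    unfolding t1 t2 Suc.IH sg_def by simp
  also have "\<dots> = sg * (AA n - B * (3/(4*real (n+1)) + 1/(2*real n + 3)))"
    by (simp add: algebra_simps)
  also have "\<dots> = sg * (- AA (Suc n))"
  proof -
    have "B * (3/(4*real (n+1)) + 1/(2*real n + 3)) = AA (Suc n) + AA n"
      using AA_rec[of n] unfolding B_def by simp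
    then show ?thesis by simp
  qed
  also have "\<dots> = (-1)^(Suc (Suc n)) * AA (Suc n)" unfolding sg_def by simp
  finally show ?case .
qed

lemma lhs_eq: "(\<Sum>k=0..n. real ((2*n+1) choose k) * (-1)^k / (real k - real (2*n+1))) = (-1)^(Suc n) * AA n"
proof -
  define m where "m = 2*n+1"
  have "(\<Sum>k=0..n. real (m choose k) * (-1)^k / (real k - real m))
      = (\<Sum>j\<in>{Suc n..n + Suc n}. (-1)^j * real (n + Suc n choose j) / real j)"
  proof (rule sum.reindex_bij_witness[of _ "\<lambda>j. m - j" "\<lambda>k. m - k"])
    fix k assume k: "k \<in> {0..n}"
    then have kn: "k \<le> n" by simp
    have e: "n + Suc n = m" unfolding m_def by simp
    have p: "(-1::real)^(m-k) = -((-1)^k)"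
    proof -
      have "m - k = 2*(n-k) + 1 + k" unfolding m_def using kn by simp
      then show ?thesis by (simp add: power_add power_mult)
    qed
    have c: "m choose (m-k) = m choose k"
      using binomial_symmetric[of k m] kn unfolding m_def by simp
    have r: "real (m - k) = real m - real k" using kn unfolding m_def by simp
    show "(-1)^(m-k) * real (n + Suc n choose (m-k)) / real (m-k) = real (m choose k) * (-1)^k / (real k - real m)"
      unfolding e p c r by (simp add: minus_divide_right)
  qed (auto simp: m_def)
  also have "\<dots> = (-1)^(Suc n) * AA n"
    unfolding key[of n "Suc n"] AA_def aa_def by simp
  finally show ?thesis unfolding m_def .
qed

theorem mainTheorem11:
  fixes n :: nat
  shows "(\<Sum>k=0..n. real ((2*n+1) choose k) * (-1)^k / (real k - real (2*n+1)))
       = - (3/4) * (\<Sum>k=1..n. real ((2*k) choose k) * (-1)^k / real k)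
         - (\<Sum>k=0..n. real ((2*k) choose k) * (-1)^k / (2 * real k + 1))"
  unfolding lhs_eq rhs_eq ..

end
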